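(* For every quantifier-free insertion query $\rho$ over the graph schema $\{E\}$ there is a constant $m\in\mathbb N$ such that for every directed acyclic graph $G$ and every change $\delta=\rho(\bar a)$, either $\delta(G)$ has a (directed) cycle containing at most $m$ bridges, or for all nodes $u,v$ of $G$ such that there is a directed path from $u$ to $v$ in $\delta(G)$ it holds that $\mathrm{bd}(u,v)\le m$.
   Context: A quantifier-free insertion query $\rho(\bar p)$ for graphs is a rule $E := E(x,y)\lor\varphi(\bar p;x,y)$ with $\varphi$ a quantifier-free formula over $\{E\}$; the change $\delta=\rho(\bar a)$ maps a directed graph $G$ to the graph $\delta(G)$ with edge set $\{(b,c): G\models E(b,c)\lor\varphi(\bar a;b,c)\}$. A bridge is an edge of $\delta(G)$ that is not an edge of $G$. For nodes $u,v$ with a directed path from $u$ to $v$ in $\delta(G)$, the bridge distance $\mathrm{bd}(u,v)$ is the minimal number $d$ such that there is a directed path from $u$ to $v$ in $\delta(G)$ using exactly $d$ bridges. *)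

theory Defs
  imports Main
begin

datatype qterm = Par nat | VarX | VarY

datatype qf = QTrue | QFalse | QE qterm qterm | QEq qterm qterm
  | QNeg qf | QConj qf qf | QDisj qf qf

fun tparams :: "qterm \<Rightarrow> nat set" where
  "tparams (Par i) = {i}" | "tparams VarX = {}" | "tparams VarY = {}"

fun qparams :: "qf \<Rightarrow> nat set" where
  "qparams QTrue = {}" | "qparams QFalse = {}"
| "qparams (QE s t) = tparams s \<union> tparams t"
| "qparams (QEq s t) = tparams s \<union> tparams t"
| "qparams (QNeg f) = qparams f"
| "qparams (QConj f g) = qparams f \<union> qparams g"
| "qparams (QDisj f g) = qparams f \<union> qparams g"

fun tval :: "'a list \<Rightarrow> 'a \<Rightarrow> 'a \<Rightarrow> qterm \<Rightarrow> 'a" where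
  "tval as b c (Par i) = as ! i" | "tval as b c VarX = b" | "tval as b c VarY = c"

fun qsat :: "('a \<times> 'a) set \<Rightarrow> 'a list \<Rightarrow> 'a \<Rightarrow> 'a \<Rightarrow> qf \<Rightarrow> bool" where
  "qsat E as b c QTrue = True"
| "qsat E as b c QFalse = False"
| "qsat E as b c (QE s t) = ((tval as b c s, tval as b c t) \<in> E)"
| "qsat E as b c (QEq s t) = (tval as b c s = tval as b c t)"
| "qsat E as b c (QNeg f) = (\<not> qsat E as b c f)"
| "qsat E as b c (QConj f g) = (qsat E as b c f \<and> qsat E as b c g)"
| "qsat E as b c (QDisj f g) = (qsat E as b c f \<or> qsat E as b c g)"

text \<open>A graph is a node set V with edge relation E; the change
  delta = rho(as) with rho being E := E(x,y) \<or> phi(p;x,y) yields edge set:\<close>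
definition changed_edges :: "'a set \<Rightarrow> ('a \<times> 'a) set \<Rightarrow> qf \<Rightarrow> 'a list \<Rightarrow> ('a \<times> 'a) set" where
  "changed_edges V E \<phi> as = {(b, c). b \<in> V \<and> c \<in> V \<and> ((b, c) \<in> E \<or> qsat E as b c \<phi>)}"

definition is_bridge :: "'a set \<Rightarrow> ('a \<times> 'a) set \<Rightarrow> qf \<Rightarrow> 'a list \<Rightarrow> 'a \<times> 'a \<Rightarrow> bool" where
  "is_bridge V E \<phi> as e \<longleftrightarrow> e \<in> changed_edges V E \<phi> as \<and> e \<notin> E"

definition is_walk :: "('a \<times> 'a) set \<Rightarrow> 'a list \<Rightarrow> bool" where
  "is_walk F xs \<longleftrightarrow> xs \<noteq> [] \<and> (\<forall>e \<in> set (zip xs (tl xs)). e \<in> F)"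

definition num_bridges :: "'a set \<Rightarrow> ('a \<times> 'a) set \<Rightarrow> qf \<Rightarrow> 'a list \<Rightarrow> 'a list \<Rightarrow> nat" where
  "num_bridges V E \<phi> as xs = length (filter (is_bridge V E \<phi> as) (zip xs (tl xs)))"

definition path_from_to :: "('a \<times> 'a) set \<Rightarrow> 'a \<Rightarrow> 'a \<Rightarrow> 'a list \<Rightarrow> bool" where
  "path_from_to F u v xs \<longleftrightarrow> is_walk F xs \<and> hd xs = u \<and> last xs = v"

definition is_cycle :: "('a \<times> 'a) set \<Rightarrow> 'a list \<Rightarrow> bool" where
  "is_cycle F xs \<longleftrightarrow> is_walk F xs \<and> length xs \<ge> 2 \<and> hd xs = last xs"

definition bridge_dist :: "'a set \<Rightarrow> ('a \<times> 'a) set \<Rightarrow> qf \<Rightarrow> 'a list \<Rightarrow> 'a \<Rightarrow> 'a \<Rightarrow> nat" where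
  "bridge_dist V E \<phi> as u v = (LEAST d. \<exists>xs. path_from_to (changed_edges V E \<phi> as) u v xs
       \<and> num_bridges V E \<phi> as xs = d)"

definition is_dag :: "'a set \<Rightarrow> ('a \<times> 'a) set \<Rightarrow> bool" where
  "is_dag V E \<longleftrightarrow> finite V \<and> E \<subseteq> V \<times> V \<and> acyclic E"

end

theory Submission
  imports Defs
begin

fun pairs :: "'a list \<Rightarrow> ('a \<times> 'a) list" where
  "pairs (x # y # zs) = (x, y) # pairs (y # zs)"
| "pairs _ = []"

lemma pairs_zip: "pairs xs = zip xs (tl xs)"
  by (induction xs rule: pairs.induct) auto

lemma pairs_Cons: "ys \<noteq> [] \<Longrightarrow> pairs (x # ys) = (x, hd ys) # pairs ys"
  by (cases ys) auto

lemma pairs_append: "pairs (xs @ y # ys) = pairs (xs @ [y]) @ pairs (y # ys)"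
  by (induction xs) (auto simp: pairs_Cons hd_append)

lemma pairs_decomp: "e \<in> set (pairs ys) \<Longrightarrow> \<exists>p q. ys = p @ fst e # snd e # q"
proof (induction ys rule: pairs.induct)
  case (1 x y zs)
  then show ?case
  proof (cases "e = (x, y)")
    case True then show ?thesis by (intro exI[of _ "[]"] exI[of _ zs]) auto
  next
    case False
    then have "e \<in> set (pairs (y # zs))" using 1 by auto
    from "1.IH"[OF this] obtain p q where "y # zs = p @ fst e # snd e # q" by blast
    then show ?thesis by (intro exI[of _ "x # p"] exI[of _ q]) auto
  qed
qed auto

definition ntyp :: "('a \<times> 'a) set \<Rightarrow> 'a list \<Rightarrow> 'a \<Rightarrow> (bool \<times> bool \<times> bool) list" where
  "ntyp E as x = map (\<lambda>a. (x = a, (a, x) \<in> E, (x, a) \<in> E)) as"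

lemma ntyp_nth:
  assumes "ntyp E as b = ntyp E as b'" "i < length as"
  shows "(b = as ! i) = (b' = as ! i)" "((as ! i, b) \<in> E) = ((as ! i, b') \<in> E)"
        "((b, as ! i) \<in> E) = ((b', as ! i) \<in> E)"
proof -
  have "ntyp E as b ! i = ntyp E as b' ! i" using assms by simp
  then show "(b = as ! i) = (b' = as ! i)" "((as ! i, b) \<in> E) = ((as ! i, b') \<in> E)"
        "((b, as ! i) \<in> E) = ((b', as ! i) \<in> E)"
    using assms(2) by (auto simp: ntyp_def)
qed

lemma qsat_cong:
  assumes "qparams \<phi> \<subseteq> {..<length as}" "ntyp E as b = ntyp E as b'" "ntyp E as c = ntyp E as c'"
    "(b = c) = (b' = c')" "((b, c) \<in> E) = ((b', c') \<in> E)" "((c, b) \<in> E) = ((c', b') \<in> E)"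
    "((b, b) \<in> E) = ((b', b') \<in> E)" "((c, c) \<in> E) = ((c', c') \<in> E)"
  shows "qsat E as b c \<phi> = qsat E as b' c' \<phi>"
  using assms(1)
proof (induction \<phi>)
  case (QE s t)
  then show ?case
    using assms ntyp_nth[OF assms(2)] ntyp_nth[OF assms(3)]
    by (cases s; cases t) (auto simp: eq_commute)
next
  case (QEq s t)
  then show ?case
    using assms ntyp_nth[OF assms(2)] ntyp_nth[OF assms(3)]
    by (cases s; cases t) (auto simp: eq_commute)
qed auto


lemma card_types: "card {xs :: (bool \<times> bool \<times> bool) list. length xs = k} = 8 ^ k"
proof -
  have "card (UNIV :: (bool \<times> bool \<times> bool) set) = 8"
    by (simp add: UNIV_Times_UNIV[symmetric] card_cartesian_product del: UNIV_Times_UNIV)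
  then show ?thesis using card_lists_length_eq[of "UNIV :: (bool \<times> bool \<times> bool) set" k] by simp
qed

lemma bound:
  assumes "distinct (map (ntyp E as \<circ> fst) (filter (is_bridge V E \<phi> as) (pairs ys)))"
  shows "num_bridges V E \<phi> as ys \<le> 8 ^ length as"
proof -
  let ?L = "map (ntyp E as \<circ> fst) (filter (is_bridge V E \<phi> as) (pairs ys))"
  have "num_bridges V E \<phi> as ys = length ?L" by (simp add: num_bridges_def pairs_zip)
  also have "\<dots> = card (set ?L)" using assms distinct_card by metis
  also have "\<dots> \<le> card {xs :: (bool \<times> bool \<times> bool) list. set xs \<subseteq> UNIV \<and> length xs = length as}"
    by (rule card_mono) (use finite_lists_length_eq[of "UNIV :: (bool \<times> bool \<times> bool) set" "length as"] in \<open>auto simp: ntyp_def\<close>)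
  finally show ?thesis by (simp add: card_types)
qed

lemma walk_pairs: "is_walk F xs \<longleftrightarrow> xs \<noteq> [] \<and> set (pairs xs) \<subseteq> F"
  by (auto simp: is_walk_def pairs_zip)

lemma nb_pairs: "num_bridges V E \<phi> as xs = length (filter (is_bridge V E \<phi> as) (pairs xs))"
  by (simp add: num_bridges_def pairs_zip)

lemma reach:
  fixes V E \<phi> as
  defines "F \<equiv> changed_edges V E \<phi> as"
  defines "D \<equiv> \<lambda>ys. distinct (map (ntyp E as \<circ> fst) (filter (is_bridge V E \<phi> as) (pairs ys)))"
  assumes acyc: "acyclic E" and Esub: "E \<subseteq> V \<times> V" and par: "qparams \<phi> \<subseteq> {..<length as}"
    and nocyc: "\<not> (\<exists>xs. is_cycle F xs \<and> num_bridges V E \<phi> as xs \<le> Suc (8 ^ length as))"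
  shows "is_walk F xs \<Longrightarrow> \<exists>ys. is_walk F ys \<and> hd ys = hd xs \<and> last ys = last xs \<and> D ys"
proof (induction xs)
  case Nil then show ?case by (simp add: is_walk_def)
next
  case (Cons x xs)
  have irr: "\<And>z. (z, z) \<notin> E" using acyc by (auto simp: acyclic_def)
  have EF: "E \<subseteq> F" using Esub by (auto simp: F_def changed_edges_def)
  show ?case
  proof (cases "xs = []")
    case True then show ?thesis using Cons.prems by (intro exI[of _ "[x]"]) (auto simp: D_def)
  next
    case False
    define w where "w = hd xs"
    have pc: "pairs (x # xs) = (x, w) # pairs xs" using False by (simp add: pairs_Cons w_def)
    have xwF: "(x, w) \<in> F" and wxs: "is_walk F xs" using Cons.prems False pc
      by (auto simp: walk_pairs)
    from Cons.IH[OF wxs] obtain ys where ys: "is_walk F ys" "hd ys = w" "last ys = last xs" "D ys"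
      by (auto simp: w_def)
    have ysne: "ys \<noteq> []" using ys by (simp add: is_walk_def)
    have pcy: "pairs (x # ys) = (x, w) # pairs ys" using ysne ys by (simp add: pairs_Cons)
    have lastx: "last (x # xs) = last xs" using False by simp
    show ?thesis
    proof (cases "(x, w) \<in> E")
      case True
      then have "\<not> is_bridge V E \<phi> as (x, w)" by (simp add: is_bridge_def)
      then show ?thesis using ys pcy xwF lastx ysne
        by (intro exI[of _ "x # ys"]) (auto simp: walk_pairs D_def)
    next
      case notE: False
      then have brxw: "is_bridge V E \<phi> as (x, w)" using xwF by (simp add: is_bridge_def F_def)
      let ?T = "map (ntyp E as \<circ> fst) (filter (is_bridge V E \<phi> as) (pairs ys))"
      show ?thesis
      proof (cases "ntyp E as x \<in> set ?T")
        case False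
        then show ?thesis using ys pcy xwF lastx ysne brxw
          by (intro exI[of _ "x # ys"]) (auto simp: walk_pairs D_def)
      next
        case True
        then obtain e where e: "e \<in> set (pairs ys)" "is_bridge V E \<phi> as e" "ntyp E as (fst e) = ntyp E as x"
          by auto
        obtain b c where bc: "e = (b, c)" by fastforce
        obtain p q where ysd: "ys = p @ b # c # q" using pairs_decomp[OF e(1)] bc by auto
        have py: "pairs ys = pairs (p @ [b]) @ (b, c) # pairs (c # q)"
          using ysd pairs_append[of p b "c # q"] by simp
        have pbc: "pairs (p @ [b, c]) = pairs (p @ [b]) @ [(b, c)]"
          using pairs_append[of p b "[c]"] by simp
        have hdp: "hd (p @ [b, c]) = w" using ys ysd by (cases p) auto
        have bcbr: "is_bridge V E \<phi> as (b, c)" using e bc by simp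
        have pyF: "set (pairs ys) \<subseteq> F" using ys walk_pairs by metis
        have bcF: "(b, c) \<in> F" "(b, c) \<notin> E" using bcbr by (auto simp: is_bridge_def F_def)
        have tb: "ntyp E as b = ntyp E as x" using e bc by simp
        have nbys: "num_bridges V E \<phi> as ys \<le> 8 ^ length as" using bound ys(4) D_def by metis
        have nbpre: "length (filter (is_bridge V E \<phi> as) (pairs (p @ [b, c]))) \<le> 8 ^ length as"
          using nbys py pbc bcbr by (simp add: nb_pairs)
        have c1: "x \<noteq> c"
        proof
          assume xc: "x = c"
          let ?C = "x # p @ [b, c]"
          have pC: "pairs ?C = (x, w) # pairs (p @ [b, c])" using hdp by (simp add: pairs_Cons)
          have "is_cycle F ?C" using pC pbc py pyF xwF xc
            by (auto simp: is_cycle_def walk_pairs)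
          moreover have "num_bridges V E \<phi> as ?C \<le> Suc (8 ^ length as)"
            using pC nbpre by (simp add: nb_pairs)
          ultimately show False using nocyc by blast
        qed
        have c2: "(c, x) \<notin> E"
        proof
          assume cx: "(c, x) \<in> E"
          let ?C = "x # p @ [b, c, x]"
          have hdp2: "hd (p @ [b, c, x]) = w" using ys ysd by (cases p) auto
          have pbcx: "pairs (p @ [b, c, x]) = pairs (p @ [b]) @ [(b, c), (c, x)]"
            using pairs_append[of p b "[c, x]"] by simp
          have pC: "pairs ?C = (x, w) # pairs (p @ [b, c, x])" using hdp2 by (simp add: pairs_Cons)
          have "is_cycle F ?C" using pC pbcx py pyF xwF cx EF
            by (auto simp: is_cycle_def walk_pairs)
          moreover have "\<not> is_bridge V E \<phi> as (c, x)" using cx by (simp add: is_bridge_def)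
          then have "num_bridges V E \<phi> as ?C \<le> Suc (8 ^ length as)"
            using pC nbpre pbcx pbc bcbr by (simp add: nb_pairs)
          ultimately show False using nocyc by blast
        qed
        have c3: "(c, b) \<notin> E"
        proof
          assume cb: "(c, b) \<in> E"
          have "is_cycle F [b, c, b]" using cb EF bcF by (auto simp: is_cycle_def walk_pairs)
          moreover have "num_bridges V E \<phi> as [b, c, b] \<le> Suc (8 ^ length as)"
            using cb by (simp add: nb_pairs is_bridge_def)
          ultimately show False using nocyc by blast
        qed
        have c4: "b \<noteq> c"
        proof
          assume "b = c"
          then have "is_cycle F [b, b]" using bcF by (auto simp: is_cycle_def walk_pairs)
          moreover have "num_bridges V E \<phi> as [b, b] \<le> Suc (8 ^ length as)"
            by (simp add: nb_pairs)
          ultimately show False using nocyc by blast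
        qed
        have xV: "x \<in> V" and cV: "c \<in> V" using xwF bcF by (auto simp: F_def changed_edges_def)
        have "(x, c) \<in> F"
        proof (cases "(x, c) \<in> E")
          case True then show ?thesis using EF by auto
        next
          case False
          have "qsat E as b c \<phi>" using bcF by (auto simp: F_def changed_edges_def)
          moreover have "qsat E as x c \<phi> = qsat E as b c \<phi>"
            by (rule qsat_cong[OF par tb[symmetric]]) (use c1 c2 c3 c4 False bcF irr in auto)
          ultimately show ?thesis using xV cV by (auto simp: F_def changed_edges_def)
        qed
        have dy: "distinct (map (ntyp E as \<circ> fst) (filter (is_bridge V E \<phi> as) (pairs ys)))"
          using ys(4) by (simp add: D_def)
        then have d1: "distinct (map (ntyp E as \<circ> fst) (filter (is_bridge V E \<phi> as) (pairs (c # q))))"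
          and d2: "ntyp E as x \<notin> set (map (ntyp E as \<circ> fst) (filter (is_bridge V E \<phi> as) (pairs (c # q))))"
          using py bcbr tb by auto
        have pxc: "pairs (x # c # q) = (x, c) # pairs (c # q)" by simp
        show ?thesis
        proof (intro exI[of _ "x # c # q"] conjI)
          show "is_walk F (x # c # q)" using pxc py pyF \<open>(x, c) \<in> F\<close> by (auto simp: walk_pairs)
          show "hd (x # c # q) = hd (x # xs)" by simp
          show "last (x # c # q) = last (x # xs)" using ys(3) ysd lastx by simp
          show "D (x # c # q)" using d1 d2 pxc by (auto simp: D_def)
        qed
      qed
    qed
  qed
qed

theorem lemma4p4:
  fixes \<phi> :: qf and k :: nat
  assumes "qparams \<phi> \<subseteq> {..<k}"
  shows "\<exists>m::nat. \<forall>(V :: nat set) E (as :: nat list).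
           is_dag V E \<and> length as = k \<and> set as \<subseteq> V \<longrightarrow>
           (\<exists>xs. is_cycle (changed_edges V E \<phi> as) xs \<and> num_bridges V E \<phi> as xs \<le> m)
         \<or> (\<forall>u \<in> V. \<forall>v \<in> V. (\<exists>xs. path_from_to (changed_edges V E \<phi> as) u v xs)
               \<longrightarrow> bridge_dist V E \<phi> as u v \<le> m)"
proof (intro exI[of _ "Suc (8 ^ k)"] allI impI)
  fix V E and as :: "nat list"
  assume h: "is_dag V E \<and> length as = k \<and> set as \<subseteq> V"
  show "(\<exists>xs. is_cycle (changed_edges V E \<phi> as) xs \<and> num_bridges V E \<phi> as xs \<le> Suc (8 ^ k))
         \<or> (\<forall>u \<in> V. \<forall>v \<in> V. (\<exists>xs. path_from_to (changed_edges V E \<phi> as) u v xs)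
               \<longrightarrow> bridge_dist V E \<phi> as u v \<le> Suc (8 ^ k))"
  proof (cases "\<exists>xs. is_cycle (changed_edges V E \<phi> as) xs \<and> num_bridges V E \<phi> as xs \<le> Suc (8 ^ k)")
    case True then show ?thesis by blast
  next
    case nc: False
    have "\<forall>u \<in> V. \<forall>v \<in> V. (\<exists>xs. path_from_to (changed_edges V E \<phi> as) u v xs)
               \<longrightarrow> bridge_dist V E \<phi> as u v \<le> Suc (8 ^ k)"
    proof (intro ballI impI)
      fix u v
      assume "u \<in> V" "v \<in> V" "\<exists>xs. path_from_to (changed_edges V E \<phi> as) u v xs"
      then obtain xs where xs: "path_from_to (changed_edges V E \<phi> as) u v xs" using \<open>\<exists>xs. path_from_to (changed_edges V E \<phi> as) u v xs\<close> by blast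
      have acyc: "acyclic E" and Es: "E \<subseteq> V \<times> V" using h by (auto simp: is_dag_def)
      have par: "qparams \<phi> \<subseteq> {..<length as}" using assms h by simp
      obtain ys where ys: "is_walk (changed_edges V E \<phi> as) ys" "hd ys = u" "last ys = v"
        "distinct (map (ntyp E as \<circ> fst) (filter (is_bridge V E \<phi> as) (pairs ys)))"
        using reach[OF acyc Es par, of xs] nc h xs by (auto simp: path_from_to_def)
      have "bridge_dist V E \<phi> as u v \<le> num_bridges V E \<phi> as ys"
        unfolding bridge_dist_def
        by (rule Least_le) (use ys in \<open>auto simp: path_from_to_def\<close>)
      also have "\<dots> \<le> 8 ^ length as" by (rule bound[OF ys(4)])
      finally show "bridge_dist V E \<phi> as u v \<le> Suc (8 ^ k)" using h by simp
    qed
    then show ?thesis by blast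
  qed
qed

end
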